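(* Let $\varepsilon\ge0$ and $t\ge1$. For probability vectors $G=(g_1,\dots,g_t)$, $G'=(g'_1,\dots,g'_t)$ define $$\overline H^*(G,G')=\max_{S\subseteq[t]}\frac{\sum_{i\in[t]\setminus S}g_i+e^{\varepsilon}\sum_{j\in S}g_j}{\sum_{i\in[t]\setminus S}g'_i+e^{\varepsilon}\sum_{j\in S}g'_j}.$$ Then $\max_{G,G'}\ln\overline H^*(G,G')=\varepsilon$, where the maximum is over all pairs of probability vectors of length $t$, and this maximum is attained by any pair $G,G'$ such that for every $i\in[t]$, $g_i\neq0$ implies $g'_i=0$.
   Context: In the paper, $G$ and $G'$ are the conditional distributions $P(\hat X\mid X_k=x)$ and $P(\hat X\mid X_k=x')$ of an attribute $\hat X$ with $t$ values given two values of a correlated attribute $X_k$, and $\ln\max_{x,x'}\overline H^*(G,G')$ is the (upper bound on the) correlation-induced privacy leakage $L_{\hat X\to X_k}$ when $\hat X$ is perturbed by an $\varepsilon$-LDP mechanism. $[t]=\{1,\dots,t\}$. *)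

theory Defs
  imports Complex_Main
begin

text \<open>A probability vector of length t, indexed by [t] = {1..t}
  (values outside {1..t} are irrelevant).\<close>
definition prob_vec :: "nat \<Rightarrow> (nat \<Rightarrow> real) \<Rightarrow> bool" where
  "prob_vec t g \<longleftrightarrow> (\<forall>i\<in>{1..t}. 0 \<le> g i) \<and> (\<Sum>i=1..t. g i) = 1"

definition Hbar :: "real \<Rightarrow> nat \<Rightarrow> (nat \<Rightarrow> real) \<Rightarrow> (nat \<Rightarrow> real) \<Rightarrow> real" where
  "Hbar eps t g g' = Max ((\<lambda>S. ((\<Sum>i\<in>{1..t} - S. g i) + exp eps * (\<Sum>j\<in>S. g j)) /
                               ((\<Sum>i\<in>{1..t} - S. g' i) + exp eps * (\<Sum>j\<in>S. g' j)))
                         ` Pow {1..t})"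

end

theory Submission
  imports Defs
begin

lemma split1:
  assumes "prob_vec t g" "S \<subseteq> {1..t}"
  shows "(\<Sum>i\<in>{1..t} - S. g i) + (\<Sum>j\<in>S. g j) = 1"
    "(\<Sum>i\<in>{1..t} - S. g i) \<ge> 0" "(\<Sum>j\<in>S. g j) \<ge> 0"
proof -
  show "(\<Sum>i\<in>{1..t} - S. g i) + (\<Sum>j\<in>S. g j) = 1"
    using assms sum.subset_diff[of S "{1..t}" g] unfolding prob_vec_def by simp
  show "(\<Sum>i\<in>{1..t} - S. g i) \<ge> 0"
    using assms unfolding prob_vec_def by (intro sum_nonneg) auto
  show "(\<Sum>j\<in>S. g j) \<ge> 0"
    using assms unfolding prob_vec_def by (intro sum_nonneg) auto
qed

lemma ratio_bound:
  assumes "prob_vec t g" "prob_vec t g'" "S \<subseteq> {1..t}" "eps \<ge> 0"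
  shows "((\<Sum>i\<in>{1..t} - S. g i) + exp eps * (\<Sum>j\<in>S. g j)) /
         ((\<Sum>i\<in>{1..t} - S. g' i) + exp eps * (\<Sum>j\<in>S. g' j)) \<le> exp eps"
proof -
  define a where "a = (\<Sum>i\<in>{1..t} - S. g i)"
  define b where "b = (\<Sum>j\<in>S. g j)"
  define a' where "a' = (\<Sum>i\<in>{1..t} - S. g' i)"
  define b' where "b' = (\<Sum>j\<in>S. g' j)"
  define E where "E = exp eps"
  have h: "a + b = 1" "a \<ge> 0" "b \<ge> 0" "a' + b' = 1" "a' \<ge> 0" "b' \<ge> 0"
    using split1[OF assms(1,3)] split1[OF assms(2,3)] unfolding a_def b_def a'_def b'_def by auto
  have E1: "E \<ge> 1" unfolding E_def using assms(4) by simp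
  have "E * b' \<ge> b'" using E1 h by (simp add: mult_right_mono[of 1 E b', simplified])
  hence D: "a' + E * b' \<ge> 1" using h by linarith
  have "E * b \<le> E * b" by simp
  have "a \<le> E * a" using E1 h mult_right_mono[of 1 E a] by simp
  moreover have "E * a + E * b = E" by (metis distrib_left mult.right_neutral h(1))
  ultimately have N: "a + E * b \<le> E" by linarith
  have "E \<le> E * (a' + E * b')" using D E1 mult_left_mono[of 1 "a' + E * b'" E] by simp
  hence "a + E * b \<le> E * (a' + E * b')" using N by linarith
  hence "(a + E * b) / (a' + E * b') \<le> E" using D by (simp add: divide_le_eq)
  thus ?thesis unfolding a_def b_def a'_def b'_def E_def .
qed

lemma Hbar_le:
  assumes "prob_vec t g" "prob_vec t g'" "eps \<ge> 0"
  shows "Hbar eps t g g' \<le> exp eps"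
  unfolding Hbar_def using ratio_bound[OF assms(1,2) _ assms(3)]
  by (subst Max_le_iff) auto

lemma Hbar_ge1:
  assumes "prob_vec t g" "prob_vec t g'"
  shows "Hbar eps t g g' \<ge> 1"
proof -
  have "1 = ((\<Sum>i\<in>{1..t} - {}. g i) + exp eps * (\<Sum>j\<in>{}. g j)) /
         ((\<Sum>i\<in>{1..t} - {}. g' i) + exp eps * (\<Sum>j\<in>{}. g' j))"
    using assms unfolding prob_vec_def by simp
  thus ?thesis unfolding Hbar_def
    by (intro Max_ge_iff[THEN iffD2]) (auto intro!: bexI[where x="{}"])
qed

lemma Hbar_eq:
  assumes "prob_vec t g" "prob_vec t g'" "eps \<ge> 0"
    "\<forall>i\<in>{1..t}. g i \<noteq> 0 \<longrightarrow> g' i = 0"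
  shows "Hbar eps t g g' = exp eps"
proof -
  define S where "S = {i\<in>{1..t}. g i \<noteq> 0}"
  have S: "S \<subseteq> {1..t}" unfolding S_def by auto
  have a0: "(\<Sum>i\<in>{1..t} - S. g i) = 0" unfolding S_def by (intro sum.neutral) auto
  have b'0: "(\<Sum>i\<in>S. g' i) = 0" unfolding S_def using assms(4) by (intro sum.neutral) auto
  have b1: "(\<Sum>i\<in>S. g i) = 1" using split1(1)[OF assms(1) S] a0 by simp
  have a'1: "(\<Sum>i\<in>{1..t} - S. g' i) = 1" using split1(1)[OF assms(2) S] b'0 by simp
  have "exp eps = ((\<Sum>i\<in>{1..t} - S. g i) + exp eps * (\<Sum>j\<in>S. g j)) /
         ((\<Sum>i\<in>{1..t} - S. g' i) + exp eps * (\<Sum>j\<in>S. g' j))"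
    using a0 b'0 b1 a'1 by simp
  hence "\<exists>x\<in>Pow {1..t}. exp eps \<le> ((\<Sum>i\<in>{1..t} - x. g i) + exp eps * (\<Sum>j\<in>x. g j)) /
         ((\<Sum>i\<in>{1..t} - x. g' i) + exp eps * (\<Sum>j\<in>x. g' j))"
    using S by (intro bexI[where x=S]) auto
  hence "Hbar eps t g g' \<ge> exp eps" unfolding Hbar_def
    by (intro Max_ge_iff[THEN iffD2]) auto
  thus ?thesis using Hbar_le[OF assms(1-3)] by linarith
qed

theorem corollary2:
  fixes eps :: real and t :: nat
  assumes "eps \<ge> 0" and "t \<ge> 2"
  shows "(\<forall>g g'. prob_vec t g \<and> prob_vec t g' \<longrightarrow> ln (Hbar eps t g g') \<le> eps)
       \<and> (\<exists>g g'. prob_vec t g \<and> prob_vec t g' \<and> ln (Hbar eps t g g') = eps)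
       \<and> (\<forall>g g'. prob_vec t g \<and> prob_vec t g' \<and> (\<forall>i\<in>{1..t}. g i \<noteq> 0 \<longrightarrow> g' i = 0)
                 \<longrightarrow> ln (Hbar eps t g g') = eps)"
proof (intro conjI allI impI)
  fix g g' assume h: "prob_vec t g \<and> prob_vec t g'"
  have "Hbar eps t g g' \<ge> 1" using Hbar_ge1 h by blast
  moreover have "Hbar eps t g g' \<le> exp eps" using Hbar_le h assms(1) by blast
  ultimately show "ln (Hbar eps t g g') \<le> eps"
    by (metis ln_exp ln_le_cancel_iff exp_gt_zero less_le_trans zero_less_one order.strict_iff_not)
next
  fix g g' assume h: "prob_vec t g \<and> prob_vec t g' \<and> (\<forall>i\<in>{1..t}. g i \<noteq> 0 \<longrightarrow> g' i = 0)"
  thus "ln (Hbar eps t g g') = eps" using Hbar_eq assms(1) by simp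
next
  define g :: "nat \<Rightarrow> real" where "g = (\<lambda>i. if i = 1 then 1 else 0)"
  define g' :: "nat \<Rightarrow> real" where "g' = (\<lambda>i. if i = 2 then 1 else 0)"
  have pg: "prob_vec t g" unfolding prob_vec_def g_def using assms(2)
    by (simp add: sum.delta)
  have pg': "prob_vec t g'" unfolding prob_vec_def g'_def using assms(2)
    by (simp add: sum.delta)
  have "\<forall>i\<in>{1..t}. g i \<noteq> 0 \<longrightarrow> g' i = 0" unfolding g_def g'_def by auto
  hence "ln (Hbar eps t g g') = eps" using Hbar_eq pg pg' assms(1) by simp
  thus "\<exists>g g'. prob_vec t g \<and> prob_vec t g' \<and> ln (Hbar eps t g g') = eps" using pg pg' by blast
qed

end
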